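(* Let $\pi:A^\infty\to LA^\infty$ be defined by $\pi(\varepsilon)=*$ and $\pi(aw)=(a,w)$ for $a\in A$, $w\in A^\infty$. Then $\pi$ is measurable and $(A^\infty,\pi)$ is a final $L$-coalgebra in $\mathbf{Meas}$: for every measurable $\gamma:X\to LX$ there is a unique measurable $\varphi:X\to A^\infty$ with $\pi\circ\varphi=L\varphi\circ\gamma$.
   Context: $A$ is a finite alphabet, $A^*$ finite words (empty word $\varepsilon$), $A^\omega$ infinite words, $A^\infty=A^*\cup A^\omega$, $wS=\{wv\mid v\in S\}$. $\Sigma_{A^\infty}$ is the $\sigma$-algebra generated by $S_\infty=\{\emptyset\}\cup\{\{w\}\mid w\in A^*\}\cup\{wA^\infty\mid w\in A^*\}$. Work in $\mathbf{Meas}$; $1=\{*\}$; the functor $L$ is $LX=A\times X+1$ with $\sigma$-algebra $(\mathcal P(A)\otimes\Sigma_X)\oplus\mathcal P(1)$ (the sum $\sigma$-algebra on a disjoint union consists of the disjoint unions of measurable pieces), and $Lf=\mathrm{id}_A\times f+\mathrm{id}_1$. *)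

theory Defs
  imports "HOL-Analysis.Analysis"
begin

text \<open>Finite and infinite words A^\<infinity> over the alphabet 'a (possibly terminating lazy lists).\<close>
codatatype 'a word = Eps | Cons 'a "'a word"

primrec prepend :: "'a list \<Rightarrow> 'a word \<Rightarrow> 'a word" where
  "prepend [] v = v"
| "prepend (a # w) v = Cons a (prepend w v)"

definition fin :: "'a list \<Rightarrow> 'a word" where
  "fin w = prepend w Eps"

definition S_inf :: "'a word set set" where
  "S_inf = {{}} \<union> {{fin w} | w. True} \<union> {prepend w ` UNIV | w. True}"

definition Ainf :: "'a word measure" where
  "Ainf = sigma UNIV S_inf"

definition Lobj :: "'b measure \<Rightarrow> ('a \<times> 'b + unit) measure" where
  "Lobj X = measure_of ((UNIV \<times> space X) <+> UNIV)
     {Inl ` S \<union> Inr ` T | S T. S \<in> sets (count_space (UNIV :: 'a set) \<Otimes>\<^sub>M X) \<and> T \<subseteq> UNIV}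
     (\<lambda>_. 0)"

definition Lmap :: "('b \<Rightarrow> 'c) \<Rightarrow> ('a \<times> 'b + unit) \<Rightarrow> ('a \<times> 'c + unit)" where
  "Lmap f = map_sum (map_prod id f) id"

definition pi_map :: "'a word \<Rightarrow> 'a \<times> 'a word + unit" where
  "pi_map w = (case w of Eps \<Rightarrow> Inr () | Cons a v \<Rightarrow> Inl (a, v))"

end

theory Submission
  imports Defs
begin

lemma S_inf_sets: "s \<in> S_inf \<Longrightarrow> s \<in> sets Ainf"
  unfolding Ainf_def by (simp add: sets_measure_of_conv)

lemma fin_sets: "{fin w} \<in> sets Ainf"
  by (rule S_inf_sets) (auto simp: S_inf_def)

lemma pre_sets: "prepend w ` UNIV \<in> sets Ainf"
  by (rule S_inf_sets) (auto simp: S_inf_def)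

lemma space_Ainf[simp]: "space Ainf = UNIV"
  unfolding Ainf_def by (simp add: S_inf_def)

lemma Ainf_measurableI:
  assumes "\<And>w. f -` {fin w} \<inter> space M \<in> sets M"
    and "\<And>w. f -` (prepend w ` UNIV) \<inter> space M \<in> sets M"
  shows "f \<in> M \<rightarrow>\<^sub>M Ainf"
  unfolding Ainf_def
  apply (rule measurable_measure_of)
  using assms by (auto simp: S_inf_def)

definition LG :: "'b measure \<Rightarrow> ('a \<times> 'b + unit) set set" where
  "LG X = {Inl ` S \<union> Inr ` T | S T. S \<in> sets (count_space (UNIV :: 'a set) \<Otimes>\<^sub>M X) \<and> T \<subseteq> UNIV}"

lemma LG_Pow: "LG X \<subseteq> Pow ((UNIV \<times> space X) <+> UNIV)"
  unfolding LG_def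
  using sets.sets_into_space by (fastforce simp: space_pair_measure)

lemma Lobj_eq: "Lobj X = measure_of ((UNIV \<times> space X) <+> UNIV) (LG X) (\<lambda>_. 0)"
  unfolding Lobj_def LG_def by simp

lemma space_Lobj: "space (Lobj X) = (UNIV \<times> space X) <+> UNIV"
  unfolding Lobj_eq by (rule space_measure_of[OF LG_Pow])

lemma LG_sets: "g \<in> LG X \<Longrightarrow> g \<in> sets (Lobj X)"
  unfolding Lobj_eq sets_measure_of[OF LG_Pow] by (rule sigma_sets.Basic)

definition hdw :: "'a word \<Rightarrow> 'a" where
  "hdw w = (case w of Eps \<Rightarrow> undefined | Cons a v \<Rightarrow> a)"
definition tlw :: "'a word \<Rightarrow> 'a word" where
  "tlw w = (case w of Eps \<Rightarrow> Eps | Cons a v \<Rightarrow> v)"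

lemma fin_simps[simp]: "fin [] = Eps" "fin (a # w) = Cons a (fin w)"
  by (simp_all add: fin_def)

lemma Eps_sets[simp]: "{Eps} \<in> sets Ainf"
  using fin_sets[of "[]"] by simp
lemma Cons_sets[simp]: "range (Cons a) \<in> sets Ainf"
  using pre_sets[of "[a]"] by simp

lemma hdw_meas: "(hdw :: 'a::finite word \<Rightarrow> 'a) \<in> Ainf \<rightarrow>\<^sub>M count_space UNIV"
proof -
  have "hdw -` {a} = prepend [a] ` UNIV \<union> (if undefined = a then {fin []} else {})" for a :: 'a
    by (auto simp: hdw_def split: word.splits)
  moreover have "prepend [a] ` UNIV \<union> (if undefined = a then {fin []} else {}) \<in> sets Ainf" for a :: 'a
    using pre_sets fin_sets sets.empty_sets by (intro sets.Un) auto
  ultimately show ?thesis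
    by (simp only: measurable_count_space_eq2[OF finite]) auto
qed

lemma tlw_meas: "(tlw :: 'a::finite word \<Rightarrow> 'a word) \<in> Ainf \<rightarrow>\<^sub>M Ainf"
proof (rule Ainf_measurableI)
  fix w :: "'a list"
  have "tlw -` {fin w} = (if w = [] then {fin []} else {}) \<union> (\<Union>a. {fin (a # w)})"
    apply (auto simp: tlw_def split: word.splits)
    apply (cases w; simp)
    done
  moreover have "(\<Union>a. {fin (a # w)}) \<in> sets Ainf"
    by (intro sets.finite_UN fin_sets) auto
  moreover have "(if w = [] then {fin []} else {}) \<in> sets Ainf"
    using fin_sets by auto
  ultimately show "tlw -` {fin w} \<inter> space Ainf \<in> sets Ainf"
    by (simp only: space_Ainf Int_UNIV_right) (rule sets.Un)
next
  fix w :: "'a list"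
  have "tlw -` (prepend w ` UNIV) = (if w = [] then UNIV else (\<Union>a. prepend (a # w) ` UNIV))"
    apply (cases w)
     apply (auto simp: tlw_def split: word.splits)
    apply blast
    done
  moreover have "(\<Union>a. prepend (a # w) ` UNIV) \<in> sets Ainf"
    by (intro sets.finite_UN pre_sets) auto
  ultimately show "tlw -` (prepend w ` UNIV) \<inter> space Ainf \<in> sets Ainf"
    using sets.top[of Ainf] by auto
qed

lemma pi_meas: "pi_map \<in> (Ainf :: 'a::finite word measure) \<rightarrow>\<^sub>M Lobj Ainf"
  unfolding Lobj_eq
proof (rule measurable_measure_of[OF LG_Pow])
  show "pi_map \<in> space Ainf \<rightarrow> (UNIV \<times> space Ainf) <+> UNIV"
    by (auto simp: pi_map_def split: word.splits)
next
  fix y assume "y \<in> (LG Ainf :: ('a \<times> 'a word + unit) set set)"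
  then obtain S T where y: "y = Inl ` S \<union> Inr ` T"
    and S: "S \<in> sets (count_space (UNIV :: 'a set) \<Otimes>\<^sub>M Ainf)" by (auto simp: LG_def)
  have hm: "(\<lambda>w::'a word. (hdw w, tlw w)) \<in> Ainf \<rightarrow>\<^sub>M count_space UNIV \<Otimes>\<^sub>M Ainf"
    by (rule measurable_Pair[OF hdw_meas tlw_meas])
  have 1: "(\<lambda>w. (hdw w, tlw w)) -` S \<in> sets Ainf"
    using measurable_sets[OF hm S] by simp
  have 2: "- {fin []} \<in> sets (Ainf :: 'a word measure)"
    using sets.compl_sets[OF fin_sets[of "[]"]] by (simp add: Compl_eq_Diff_UNIV)
  have "pi_map -` y = ((\<lambda>w. (hdw w, tlw w)) -` S \<inter> - {fin []}) \<union> (if T = {} then {} else {fin []})"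
    by (auto simp: y pi_map_def hdw_def tlw_def split: word.splits)
  then show "pi_map -` y \<inter> space Ainf \<in> sets Ainf"
    using 1 2 fin_sets[of "[]"] by (simp only: space_Ainf Int_UNIV_right) (intro sets.Un sets.Int; simp)
qed


primcorec unf :: "('b \<Rightarrow> 'a \<times> 'b + unit) \<Rightarrow> 'b \<Rightarrow> 'a word" where
  "unf g x = (case g x of Inr _ \<Rightarrow> Eps | Inl p \<Rightarrow> Cons (fst p) (unf g (snd p)))"

lemma unf_eq: "pi_map (unf g x) = Lmap (unf g) (g x)"
  by (subst unf.code) (auto simp: pi_map_def Lmap_def split: sum.splits)

lemma gamma_pre:
  assumes g: "\<gamma> \<in> X \<rightarrow>\<^sub>M Lobj X"
    and S: "S \<in> sets (count_space (UNIV :: 'a set) \<Otimes>\<^sub>M X)"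
  shows "\<gamma> -` (Inl ` S \<union> Inr ` T) \<inter> space X \<in> sets X"
proof -
  have "Inl ` S \<union> Inr ` T \<in> LG X" using S unfolding LG_def by blast
  from measurable_sets[OF g LG_sets[OF this]] show ?thesis .
qed

lemma unf_meas:
  fixes \<gamma> :: "'b \<Rightarrow> 'a::finite \<times> 'b + unit"
  assumes g: "\<gamma> \<in> X \<rightarrow>\<^sub>M Lobj X"
  shows "unf \<gamma> \<in> X \<rightarrow>\<^sub>M Ainf"
proof (rule Ainf_measurableI)
  fix w :: "'a list"
  show "unf \<gamma> -` {fin w} \<inter> space X \<in> sets X"
  proof (induction w)
    case Nil
    have "unf \<gamma> -` {fin []} \<inter> space X = \<gamma> -` (Inl ` {} \<union> Inr ` UNIV) \<inter> space X"
      apply (rule set_eqI)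
      subgoal for x by (simp only: Int_iff vimage_eq, subst unf.code) (auto split: sum.splits)
      done
    then show ?case using gamma_pre[OF g, of "{}" UNIV] by simp
  next
    case (Cons a w)
    have "{a} \<times> (unf \<gamma> -` {fin w} \<inter> space X) \<in> sets (count_space (UNIV :: 'a set) \<Otimes>\<^sub>M X)"
      using Cons by (intro pair_measureI) auto
    moreover have "unf \<gamma> -` {fin (a # w)} \<inter> space X
       = \<gamma> -` (Inl ` ({a} \<times> (unf \<gamma> -` {fin w} \<inter> space X)) \<union> Inr ` {}) \<inter> space X"
    proof -
      have sp: "x \<in> space X \<Longrightarrow> \<gamma> x \<in> (UNIV \<times> space X) <+> UNIV" for x
        using measurable_space[OF g] by (simp add: space_Lobj)
      show ?thesis
        apply (rule set_eqI)
        subgoal for x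
          apply (simp only: Int_iff vimage_eq, subst unf.code)
          using sp[of x] by (auto split: sum.splits)
        done
    qed
    ultimately show ?case using gamma_pre[OF g] by metis
  qed
next
  fix w :: "'a list"
  show "unf \<gamma> -` (prepend w ` UNIV) \<inter> space X \<in> sets X"
  proof (induction w)
    case Nil
    then show ?case by simp
  next
    case (Cons a w)
    have "{a} \<times> (unf \<gamma> -` (prepend w ` UNIV) \<inter> space X) \<in> sets (count_space (UNIV :: 'a set) \<Otimes>\<^sub>M X)"
      using Cons by (intro pair_measureI) auto
    moreover have "unf \<gamma> -` (prepend (a # w) ` UNIV) \<inter> space X
       = \<gamma> -` (Inl ` ({a} \<times> (unf \<gamma> -` (prepend w ` UNIV) \<inter> space X)) \<union> Inr ` {}) \<inter> space X"
    proof -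
      have sp: "x \<in> space X \<Longrightarrow> \<gamma> x \<in> (UNIV \<times> space X) <+> UNIV" for x
        using measurable_space[OF g] by (simp add: space_Lobj)
      show ?thesis
        apply (rule set_eqI)
        subgoal for x
          apply (simp only: Int_iff vimage_eq, subst unf.code)
          using sp[of x] by (auto split: sum.splits)
        done
    qed
    ultimately show ?case using gamma_pre[OF g] by metis
  qed
qed

lemma unf_unique:
  fixes \<gamma> :: "'b \<Rightarrow> 'a \<times> 'b + unit"
  assumes g: "\<gamma> \<in> X \<rightarrow>\<^sub>M Lobj X"
    and h: "\<forall>x \<in> space X. pi_map (\<psi> x) = Lmap \<psi> (\<gamma> x)"
    and x: "x \<in> space X"
  shows "\<psi> x = unf \<gamma> x"
proof -
  have sp: "x \<in> space X \<Longrightarrow> \<gamma> x \<in> (UNIV \<times> space X) <+> UNIV" for x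
    using measurable_space[OF g] by (simp add: space_Lobj)
  have "\<exists>x\<in>space X. u = \<psi> x \<and> v = unf \<gamma> x \<Longrightarrow> u = v" for u v
  proof (coinduction arbitrary: u v rule: word.coinduct)
    case (Eq_word u v)
    then obtain x where x: "x \<in> space X" and uv: "u = \<psi> x" "v = unf \<gamma> x" by blast
    have hx: "pi_map (\<psi> x) = Lmap \<psi> (\<gamma> x)" using h x by blast
    have vx: "pi_map (unf \<gamma> x) = Lmap (unf \<gamma>) (\<gamma> x)" by (rule unf_eq)
    show ?case
    proof (cases "\<gamma> x")
      case (Inl p)
      obtain a y where p: "p = (a, y)" by (cases p)
      have y: "y \<in> space X" using sp[OF x] Inl p by auto
      have "\<psi> x = Cons a (\<psi> y)" "unf \<gamma> x = Cons a (unf \<gamma> y)"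
        using hx vx Inl p by (auto simp: pi_map_def Lmap_def split: word.splits)
      then show ?thesis using uv y by auto
    next
      case (Inr q)
      have "\<psi> x = Eps" "unf \<gamma> x = Eps"
        using hx vx Inr by (auto simp: pi_map_def Lmap_def split: word.splits)
      then show ?thesis using uv by auto
    qed
  qed
  then show ?thesis using x by blast
qed

theorem mainTheorem8:
  fixes X :: "'b measure" and \<gamma> :: "'b \<Rightarrow> 'a::finite \<times> 'b + unit"
  assumes "\<gamma> \<in> X \<rightarrow>\<^sub>M Lobj X"
  shows "pi_map \<in> (Ainf :: 'a word measure) \<rightarrow>\<^sub>M Lobj Ainf
    \<and> (\<exists>\<phi> \<in> X \<rightarrow>\<^sub>M Ainf. (\<forall>x \<in> space X. pi_map (\<phi> x) = Lmap \<phi> (\<gamma> x))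
         \<and> (\<forall>\<psi> \<in> X \<rightarrow>\<^sub>M Ainf. (\<forall>x \<in> space X. pi_map (\<psi> x) = Lmap \<psi> (\<gamma> x))
               \<longrightarrow> (\<forall>x \<in> space X. \<psi> x = \<phi> x)))"
proof (intro conjI bexI[of _ "unf \<gamma>"] ballI allI impI)
  show "pi_map \<in> (Ainf :: 'a word measure) \<rightarrow>\<^sub>M Lobj Ainf" by (rule pi_meas)
  show "unf \<gamma> \<in> X \<rightarrow>\<^sub>M Ainf" by (rule unf_meas[OF assms])
  fix x assume "x \<in> space X"
  show "pi_map (unf \<gamma> x) = Lmap (unf \<gamma>) (\<gamma> x)" by (rule unf_eq)
next
  fix \<psi> x assume "\<forall>x\<in>space X. pi_map (\<psi> x) = Lmap \<psi> (\<gamma> x)" "x \<in> space X"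
  then show "\<psi> x = unf \<gamma> x" by (rule unf_unique[OF assms])
qed

end
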